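(* Let $n\geq 1$ and $0\leq m\leq n$, and let $S$ range over subsets of $\{1,\dots,n\}$ with $|S|=m$, $S^c=\{1,\dots,n\}\setminus S$. Then \begin{equation*} \sum_{\substack{S~\textrm{with}\\|S| = m}} \bigg(\prod_{\substack{\alpha<\beta,\\\alpha,\beta \in S^c}} T_{\beta\alpha}\bigg)\bigg(\prod_{\substack{\alpha<\beta,\\\alpha,\beta \in S}} T_{\beta\alpha}\bigg)\bigg( \prod_{\substack{\alpha<\beta,\\\ \alpha\in S, \beta \in S^c}} S_{\beta\alpha}\bigg) = \frac{[n]!}{[n-m]!\,[m]!}\bigg(\prod_{\substack{\alpha<\beta,\\ \alpha,\beta \in \{1,\dots, n\}} }T_{\beta\alpha}\bigg). \end{equation*}
   Context: Here $p\in(0,1)$, $q=1-p$, and $\xi_1,\dots,\xi_n$ are complex variables, with $S_{\beta\alpha} = -\frac{p+q\xi_{\alpha}\xi_{\beta} - \xi_{\beta}}{p+q\xi_{\alpha}\xi_{\beta} - \xi_{\alpha}}$ and $T_{\beta\alpha} = \frac{\xi_{\beta}-\xi_{\alpha}}{p+q\xi_{\alpha}\xi_{\beta} - \xi_{\alpha}}$. For nonnegative integers $k$, $[k] = \frac{p^k-q^k}{p-q}$, $[k]! = [k][k-1]\cdots[1]$ for $k\geq 1$ and $[0]!=1$. (The $(p,q)$-binomial coefficient $\frac{[n]!}{[n-m]![m]!}$ is defined to be $0$ if $m>n$.) *)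

theory Defs
  imports "HOL-Analysis.Analysis"
begin

definition Sm :: "real \<Rightarrow> (nat \<Rightarrow> complex) \<Rightarrow> nat \<Rightarrow> nat \<Rightarrow> complex" where
  "Sm p \<xi> \<beta> \<alpha> = - (of_real p + of_real (1 - p) * \<xi> \<alpha> * \<xi> \<beta> - \<xi> \<beta>)
                      / (of_real p + of_real (1 - p) * \<xi> \<alpha> * \<xi> \<beta> - \<xi> \<alpha>)"

definition Tm :: "real \<Rightarrow> (nat \<Rightarrow> complex) \<Rightarrow> nat \<Rightarrow> nat \<Rightarrow> complex" where
  "Tm p \<xi> \<beta> \<alpha> = (\<xi> \<beta> - \<xi> \<alpha>)
                      / (of_real p + of_real (1 - p) * \<xi> \<alpha> * \<xi> \<beta> - \<xi> \<alpha>)"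

text \<open>(p,q)-integer [k] = (p^k - q^k)/(p - q), written as the polynomial
  sum p^(k-1) + p^(k-2) q + ... + q^(k-1), which agrees with the quotient for p \<noteq> q
  and is its continuous extension at p = q = 1/2.\<close>
definition pq_int :: "real \<Rightarrow> nat \<Rightarrow> real" where
  "pq_int p k = (\<Sum>j<k. p ^ j * (1 - p) ^ (k - 1 - j))"

definition pq_fact :: "real \<Rightarrow> nat \<Rightarrow> real" where
  "pq_fact p k = (\<Prod>i\<in>{1..k}. pq_int p i)"

definition pq_binom :: "real \<Rightarrow> nat \<Rightarrow> nat \<Rightarrow> real" where
  "pq_binom p n m = (if m > n then 0 else pq_fact p n / (pq_fact p (n - m) * pq_fact p m))"

end

theory Submission
  imports Defs "HOL-Computational_Algebra.Polynomial"
begin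


definition pf :: "nat \<Rightarrow> (complex \<Rightarrow> complex) \<Rightarrow> bool" where
  "pf d f = (\<exists>P. degree P \<le> d \<and> (\<forall>x. f x = poly P x))"

lemma pf_const: "pf d (\<lambda>x. c)"
  unfolding pf_def by (rule exI[of _ "[:c:]"]) auto

lemma pf_id: "1 \<le> d \<Longrightarrow> pf d (\<lambda>x. x)"
  unfolding pf_def by (rule exI[of _ "[:0,1:]"]) auto

lemma pf_mono: "pf d f \<Longrightarrow> d \<le> e \<Longrightarrow> pf e f"
  unfolding pf_def using order_trans by blast

lemma pf_add: "pf d f \<Longrightarrow> pf d g \<Longrightarrow> pf d (\<lambda>x. f x + g x)"
  unfolding pf_def
  by (metis degree_add_le poly_add)

lemma pf_diff: "pf d f \<Longrightarrow> pf d g \<Longrightarrow> pf d (\<lambda>x. f x - g x)"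
  unfolding pf_def
  by (metis degree_diff_le poly_diff)

lemma pf_uminus: "pf d f \<Longrightarrow> pf d (\<lambda>x. - f x)"
  unfolding pf_def
  by (metis degree_minus poly_minus)

lemma pf_mult: "pf d f \<Longrightarrow> pf e g \<Longrightarrow> pf (d + e) (\<lambda>x. f x * g x)"
  unfolding pf_def
  by (metis add_mono degree_mult_le order_trans poly_mult)

lemma pf_sum: "finite A \<Longrightarrow> (\<And>i. i \<in> A \<Longrightarrow> pf d (f i)) \<Longrightarrow> pf d (\<lambda>x. \<Sum>i\<in>A. f i x)"
  by (induction A rule: finite_induct) (auto intro: pf_add pf_const)

lemma pf_prod: "finite A \<Longrightarrow> (\<And>i. i \<in> A \<Longrightarrow> pf (e i) (f i)) \<Longrightarrow> pf (\<Sum>i\<in>A. e i) (\<lambda>x. \<Prod>i\<in>A. f i x)"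
proof (induction A rule: finite_induct)
  case empty then show ?case by (simp add: pf_const)
next
  case (insert a A)
  then show ?case by (simp add: pf_mult)
qed

lemma pf_zero_cofinite:
  assumes "pf d f" "finite F" "\<And>x. x \<notin> F \<Longrightarrow> f x = 0"
  shows "f y = 0"
proof -
  obtain P where P: "\<And>x. f x = poly P x" using assms(1) unfolding pf_def by auto
  show ?thesis
  proof (cases "P = 0")
    case True then show ?thesis using P by simp
  next
    case False
    have "UNIV - F \<subseteq> {x. poly P x = 0}" using assms(3) P by auto
    then have "finite (UNIV - F)" using poly_roots_finite[OF False] finite_subset by blast
    then have "finite (UNIV :: complex set)" using assms(2) by (metis Diff_UNIV finite_Diff2)
    then show ?thesis using infinite_UNIV_char_0 by blast
  qed
qed

lemma pf_zero_roots:
  assumes "pf d f" "finite R" "d < card R" "\<And>r. r \<in> R \<Longrightarrow> f r = 0"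
  shows "f y = 0"
proof -
  obtain P where P: "\<And>x. f x = poly P x" and dP: "degree P \<le> d" using assms(1) unfolding pf_def by auto
  show ?thesis
  proof (cases "P = 0")
    case True then show ?thesis using P by simp
  next
    case False
    have "R \<subseteq> {x. poly P x = 0}" using assms(4) P by auto
    then have "card R \<le> card {x. poly P x = 0}" using poly_roots_finite[OF False] card_mono by blast
    also have "\<dots> \<le> degree P" by (rule card_poly_roots_bound[OF False])
    finally show ?thesis using dP assms(3) by simp
  qed
qed



lemma pq_int_Suc1: "pq_int p (Suc k) = p ^ k + (1 - p) * pq_int p k"
proof -
  have "pq_int p (Suc k) = (\<Sum>j<k. p ^ j * (1 - p) ^ (k - j)) + p ^ k"
    unfolding pq_int_def by simp
  also have "(\<Sum>j<k. p ^ j * (1 - p) ^ (k - j)) = (1 - p) * pq_int p k"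
    unfolding pq_int_def sum_distrib_left
    by (rule sum.cong) (auto simp: Suc_diff_Suc power_Suc[symmetric] simp del: power_Suc)
  finally show ?thesis by simp
qed

lemma pq_int_Suc2: "pq_int p (Suc k) = (1 - p) ^ k + p * pq_int p k"
proof -
  have "pq_int p (Suc k) = (1 - p) ^ k + (\<Sum>j<k. p ^ Suc j * (1 - p) ^ (k - Suc j))"
    unfolding pq_int_def by (subst sum.lessThan_Suc_shift) simp
  also have "(\<Sum>j<k. p ^ Suc j * (1 - p) ^ (k - Suc j)) = p * pq_int p k"
    unfolding pq_int_def sum_distrib_left
    by (rule sum.cong) auto
  finally show ?thesis by simp
qed

lemma pq_int_split: "m \<le> n \<Longrightarrow> pq_int p n = p ^ (n - m) * pq_int p m + (1 - p) ^ m * pq_int p (n - m)"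
proof (induction m)
  case 0 then show ?case by (simp add: pq_int_def)
next
  case (Suc m)
  obtain r where r: "n - m = Suc r" using Suc.prems by (metis Suc_diff_Suc Suc_le_lessD)
  have r2: "n - Suc m = r" using r by simp
  have "pq_int p n = p ^ (n - m) * pq_int p m + (1 - p) ^ m * pq_int p (n - m)"
    using Suc by simp
  also have "\<dots> = p ^ r * p * pq_int p m + (1 - p) ^ m * (p ^ r + (1 - p) * pq_int p r)"
    unfolding r pq_int_Suc1 by simp
  also have "\<dots> = p ^ r * ((1 - p) ^ m + p * pq_int p m) + (1 - p) ^ Suc m * pq_int p r"
    by (simp add: algebra_simps)
  also have "\<dots> = p ^ (n - Suc m) * pq_int p (Suc m) + (1 - p) ^ Suc m * pq_int p (n - Suc m)"
    unfolding r2 pq_int_Suc2 ..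
  finally show ?case .
qed

lemma pq_int_pos: "0 < p \<Longrightarrow> p < 1 \<Longrightarrow> 1 \<le> k \<Longrightarrow> 0 < pq_int p k"
proof -
  assume a: "0 < p" "p < 1" "1 \<le> k"
  have "0 < p ^ 0 * (1 - p) ^ (k - 1 - 0)" using a by simp
  also have "\<dots> \<le> pq_int p k" unfolding pq_int_def
    by (rule member_le_sum) (use a in auto)
  finally show ?thesis .
qed

lemma pq_fact_pos: "0 < p \<Longrightarrow> p < 1 \<Longrightarrow> 0 < pq_fact p k"
  unfolding pq_fact_def by (rule prod_pos) (auto intro: pq_int_pos)

lemma pq_fact_Suc: "pq_fact p (Suc k) = pq_int p (Suc k) * pq_fact p k"
  unfolding pq_fact_def by (simp add: atLeastAtMostSuc_conv mult.commute)

lemma pq_pascal: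
  assumes "0 < p" "p < 1" "1 \<le> m"
  shows "pq_binom p (Suc k) m = (1 - p) ^ m * pq_binom p k m + p ^ (Suc k - m) * pq_binom p k (m - 1)"
proof -
  consider "m > Suc k" | "m = Suc k" | "m \<le> k" by linarith
  then show ?thesis
  proof cases
    case 1 then show ?thesis by (simp add: pq_binom_def)
  next
    case 2
    have "pq_fact p (Suc k) \<noteq> 0" "pq_fact p k \<noteq> 0" using pq_fact_pos[OF assms(1,2)] by (metis less_irrefl)+
    moreover have "pq_fact p 0 = 1" by (simp add: pq_fact_def)
    ultimately show ?thesis using 2 by (simp add: pq_binom_def)
  next
    case 3
    obtain j where j: "m = Suc j" using assms(3) by (cases m) auto
    obtain r where r: "Suc k - m = Suc r" using 3 by (metis Suc_diff_le diff_Suc_Suc)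
    have kr: "k - m = r" "k - j = Suc r" using r j 3 by auto
    have sp: "pq_int p (Suc k) = p ^ Suc r * pq_int p (Suc j) + (1 - p) ^ Suc j * pq_int p (Suc r)"
      using pq_int_split[of m "Suc k" p] r j 3 by simp
    have pos: "0 < pq_fact p r" "0 < pq_fact p j" "0 < pq_int p (Suc r)" "0 < pq_int p (Suc j)"
      using pq_fact_pos[OF assms(1,2)] pq_int_pos[OF assms(1,2)] by auto
    have e1: "pq_binom p (Suc k) m = pq_int p (Suc k) * pq_fact p k / (pq_int p (Suc r) * pq_fact p r * (pq_int p (Suc j) * pq_fact p j))"
      unfolding pq_binom_def using 3 r j by (simp add: pq_fact_Suc)
    have e2: "pq_binom p k m = pq_fact p k / (pq_fact p r * (pq_int p (Suc j) * pq_fact p j))"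
      unfolding pq_binom_def using 3 kr j by (simp add: pq_fact_Suc)
    have e3: "pq_binom p k (m - 1) = pq_fact p k / (pq_int p (Suc r) * pq_fact p r * pq_fact p j)"
      unfolding pq_binom_def using 3 kr j by (simp add: pq_fact_Suc)
    show ?thesis unfolding e1 e2 e3 r sp using pos j
      by (simp add: field_simps)
  qed
qed



definition gg :: "real \<Rightarrow> (nat \<Rightarrow> complex) \<Rightarrow> nat \<Rightarrow> nat \<Rightarrow> complex" where
  "gg p \<xi> a b = of_real p + of_real (1 - p) * \<xi> a * \<xi> b - \<xi> a"

definition psi :: "real \<Rightarrow> (nat \<Rightarrow> complex) \<Rightarrow> nat set \<Rightarrow> nat \<Rightarrow> nat \<Rightarrow> complex" where
  "psi p \<xi> S a b = (if (a \<in> S \<longleftrightarrow> b \<in> S) then \<xi> b - \<xi> a else if a \<in> S then - gg p \<xi> b a else gg p \<xi> a b)"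

definition PP :: "nat \<Rightarrow> (nat \<times> nat) set" where
  "PP n = {(a, b). a \<in> {1..n} \<and> b \<in> {1..n} \<and> a < b}"

definition FF :: "nat \<Rightarrow> nat \<Rightarrow> nat set set" where
  "FF n m = {S. S \<subseteq> {1..n} \<and> card S = m}"

definition LL :: "real \<Rightarrow> (nat \<Rightarrow> complex) \<Rightarrow> nat \<Rightarrow> nat \<Rightarrow> complex" where
  "LL p \<xi> n m = (\<Sum>S\<in>FF n m. \<Prod>(a, b)\<in>PP n. psi p \<xi> S a b)"

definition VV :: "(nat \<Rightarrow> complex) \<Rightarrow> nat \<Rightarrow> complex" where
  "VV \<xi> n = (\<Prod>(a, b)\<in>PP n. \<xi> b - \<xi> a)"

definition QQ :: "real \<Rightarrow> nat \<Rightarrow> nat \<Rightarrow> (nat \<Rightarrow> complex) \<Rightarrow> complex" where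
  "QQ p n m \<xi> = LL p \<xi> n m - of_real (pq_binom p n m) * VV \<xi> n"

definition tau :: "nat \<Rightarrow> nat \<Rightarrow> nat" where
  "tau k j = (if j = k then Suc k else if j = Suc k then k else j)"

lemma finite_PP: "finite (PP n)"
proof -
  have "PP n \<subseteq> {1..n} \<times> {1..n}" unfolding PP_def by auto
  then show ?thesis by (rule finite_subset) auto
qed

lemma finite_FF: "finite (FF n m)"
proof -
  have "FF n m \<subseteq> Pow {1..n}" unfolding FF_def by auto
  then show ?thesis by (rule finite_subset) auto
qed

lemma prod_PP_Suc:
  "(\<Prod>(a, b)\<in>PP (Suc k). h a b) = (\<Prod>(a, b)\<in>PP k. h a b) * (\<Prod>a\<in>{1..k}. h a (Suc k))"
proof -
  have e: "PP (Suc k) = PP k \<union> (\<lambda>a. (a, Suc k)) ` {1..k}" unfolding PP_def by auto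
  have d: "PP k \<inter> (\<lambda>a. (a, Suc k)) ` {1..k} = {}" unfolding PP_def by auto
  have "(\<Prod>(a, b)\<in>PP (Suc k). h a b) = (\<Prod>(a, b)\<in>PP k. h a b) * (\<Prod>(a, b)\<in>(\<lambda>a. (a, Suc k)) ` {1..k}. h a b)"
    unfolding e by (rule prod.union_disjoint) (use finite_PP d in auto)
  also have "(\<Prod>(a, b)\<in>(\<lambda>a. (a, Suc k)) ` {1..k}. h a b) = (\<Prod>a\<in>{1..k}. h a (Suc k))"
    by (subst prod.reindex) (auto simp: inj_on_def)
  finally show ?thesis .
qed

lemma psi_antisym: "psi p \<xi> S b a = - psi p \<xi> S a b"
  unfolding psi_def by auto

lemma tau_inv[simp]: "tau k (tau k x) = x"
  unfolding tau_def by auto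

lemma in_tau_image: "a \<in> tau k ` S \<longleftrightarrow> tau k a \<in> S"
  by (metis image_iff tau_inv)

lemma inj_tau: "inj (tau k)"
  by (metis inj_def tau_inv)

lemma prod_tau:
  fixes h :: "nat \<Rightarrow> nat \<Rightarrow> complex"
  assumes "1 \<le> k" "Suc k \<le> n" "\<And>a b. h b a = - h a b"
  shows "(\<Prod>(a, b)\<in>PP n. h (tau k a) (tau k b)) = - (\<Prod>(a, b)\<in>PP n. h a b)"
proof -
  define P0 where "P0 = PP n - {(k, Suc k)}"
  have mem: "(k, Suc k) \<in> PP n" using assms unfolding PP_def by auto
  have "(\<Prod>(a, b)\<in>PP n. h (tau k a) (tau k b)) = h (tau k k) (tau k (Suc k)) * (\<Prod>(a, b)\<in>P0. h (tau k a) (tau k b))"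
    unfolding P0_def using prod.remove[OF finite_PP mem, of "\<lambda>(a, b). h (tau k a) (tau k b)"] by simp
  also have "h (tau k k) (tau k (Suc k)) = - h k (Suc k)" using assms(3)[of "Suc k" k] by (simp add: tau_def)
  also have "(\<Prod>(a, b)\<in>P0. h (tau k a) (tau k b)) = (\<Prod>(a, b)\<in>P0. h a b)"
  proof -
    have memP: "(tau k a, tau k b) \<in> P0" if "(a, b) \<in> P0" for a b
      using that assms(1,2) unfolding P0_def PP_def tau_def by auto
    show ?thesis
      by (rule prod.reindex_bij_witness[of P0 "\<lambda>(a, b). (tau k a, tau k b)" "\<lambda>(a, b). (tau k a, tau k b)"])
         (auto simp: memP)
  qed
  also have "- h k (Suc k) * (\<Prod>(a, b)\<in>P0. h a b) = - (\<Prod>(a, b)\<in>PP n. h a b)"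
    unfolding P0_def using prod.remove[OF finite_PP mem, of "\<lambda>(a, b). h a b"] by simp
  finally show ?thesis .
qed

lemma tau_range: "1 \<le> k \<Longrightarrow> Suc k \<le> n \<Longrightarrow> x \<in> {1..n} \<Longrightarrow> tau k x \<in> {1..n}"
  unfolding tau_def by auto

lemma LL_tau:
  assumes "1 \<le> k" "Suc k \<le> n"
  shows "LL p (\<xi> \<circ> tau k) n m = - LL p \<xi> n m"
proof -
  have inj: "inj_on ((`) (tau k)) (FF n m)"
    by (meson inj_image_eq_iff inj_onI inj_tau)
  have sub: "tau k ` S \<in> FF n m" if S: "S \<in> FF n m" for S
  proof -
    have "tau k ` S \<subseteq> {1..n}" using S tau_range[OF assms] unfolding FF_def by auto
    moreover have "card (tau k ` S) = card S" using inj_tau by (metis card_image inj_on_subset subset_UNIV)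
    ultimately show "tau k ` S \<in> FF n m" using S unfolding FF_def by auto
  qed
  have img: "(`) (tau k) ` FF n m = FF n m"
  proof
    show "(`) (tau k) ` FF n m \<subseteq> FF n m" using sub by auto
    show "FF n m \<subseteq> (`) (tau k) ` FF n m"
    proof
      fix S assume "S \<in> FF n m"
      then have "tau k ` S \<in> FF n m" "tau k ` (tau k ` S) = S" using sub by (auto simp: image_image)
      then show "S \<in> (`) (tau k) ` FF n m" by (metis image_eqI)
    qed
  qed
  have "LL p (\<xi> \<circ> tau k) n m = (\<Sum>S\<in>(`) (tau k) ` FF n m. \<Prod>(a, b)\<in>PP n. psi p (\<xi> \<circ> tau k) S a b)"
    unfolding LL_def img ..
  also have "\<dots> = (\<Sum>S\<in>FF n m. \<Prod>(a, b)\<in>PP n. psi p (\<xi> \<circ> tau k) (tau k ` S) a b)"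
    by (subst sum.reindex[OF inj]) simp
  also have "\<dots> = (\<Sum>S\<in>FF n m. \<Prod>(a, b)\<in>PP n. psi p \<xi> S (tau k a) (tau k b))"
    by (rule sum.cong[OF refl], rule prod.cong[OF refl])
       (auto simp: psi_def gg_def in_tau_image)
  also have "\<dots> = (\<Sum>S\<in>FF n m. - (\<Prod>(a, b)\<in>PP n. psi p \<xi> S a b))"
    by (rule sum.cong[OF refl], rule prod_tau[OF assms]) (rule psi_antisym)
  finally show ?thesis unfolding LL_def by (simp add: sum_negf)
qed

lemma VV_tau:
  assumes "1 \<le> k" "Suc k \<le> n"
  shows "VV (\<xi> \<circ> tau k) n = - VV \<xi> n"
  unfolding VV_def using prod_tau[OF assms, of "\<lambda>a b. \<xi> b - \<xi> a"] by simp

lemma QQ_tau: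
  assumes "1 \<le> k" "Suc k \<le> n"
  shows "QQ p n m (\<xi> \<circ> tau k) = - QQ p n m \<xi>"
  unfolding QQ_def LL_tau[OF assms] VV_tau[OF assms] by simp

lemma QQ_eq_zero:
  assumes "1 \<le> a" "a < n" "\<xi> a = \<xi> n"
  shows "QQ p n m \<xi> = 0"
  using assms
proof (induction "n - a" arbitrary: a \<xi> rule: less_induct)
  case less
  have t: "1 \<le> a" "Suc a \<le> n" using less.prems by auto
  show ?case
  proof (cases "Suc a = n")
    case True
    have "\<xi> \<circ> tau a = \<xi>" using less.prems True by (auto simp: tau_def fun_eq_iff)
    then have "QQ p n m \<xi> = - QQ p n m \<xi>" using QQ_tau[OF t, of p m \<xi>] by simp
    then show ?thesis by simp
  next
    case False
    have "QQ p n m (\<xi> \<circ> tau a) = 0"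
      by (rule less.hyps[of "Suc a"]) (use less.prems False in \<open>auto simp: tau_def\<close>)
    then show ?thesis using QQ_tau[OF t, of p m \<xi>] by simp
  qed
qed



lemma pf_coord: "pf 1 (\<lambda>x. (\<xi>(k := x)) a)"
  by (cases "a = k") (auto intro: pf_id pf_const)

lemma pf_lin: "pf 1 (\<lambda>x. c * x)"
  unfolding pf_def by (rule exI[of _ "[:0, c:]"]) auto

lemma pf_coord2: "pf 2 (\<lambda>x. (\<xi>(k := x)) a)"
  by (rule pf_mono[OF pf_coord]) simp

lemma pf_if: "pf d f \<Longrightarrow> pf d g \<Longrightarrow> pf d (\<lambda>x. if c then f x else g x)"
  by (cases c) auto

lemma pf_gg: "pf 2 (\<lambda>x. gg p (\<xi>(k := x)) a b)"
proof -
  have "pf (0 + 1 + 1) (\<lambda>x. of_real (1 - p) * (\<xi>(k := x)) a * (\<xi>(k := x)) b)"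
    by (rule pf_mult[OF pf_mult[OF pf_const pf_coord] pf_coord])
  then have m: "pf 2 (\<lambda>x. of_real (1 - p) * (\<xi>(k := x)) a * (\<xi>(k := x)) b)"
    by (simp add: numeral_2_eq_2)
  have "pf 2 (\<lambda>x. of_real p + of_real (1 - p) * (\<xi>(k := x)) a * (\<xi>(k := x)) b - (\<xi>(k := x)) a)"
    by (rule pf_diff[OF pf_add[OF pf_const m] pf_coord2])
  then show ?thesis unfolding gg_def .
qed

lemma pf_psi: "pf 2 (\<lambda>x. psi p (\<xi>(k := x)) S a b)"
  unfolding psi_def by (intro pf_if pf_diff pf_uminus pf_gg pf_coord2)

lemma pf_prodPP:
  assumes "\<And>a b. pf d (\<lambda>x. h x a b)"
  shows "pf (\<Sum>z\<in>PP n. d) (\<lambda>x. \<Prod>(a, b)\<in>PP n. h x a b)"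
proof -
  have "pf (\<Sum>z\<in>PP n. d) (\<lambda>x. \<Prod>z\<in>PP n. (\<lambda>z x. case z of (a, b) \<Rightarrow> h x a b) z x)"
    by (rule pf_prod[OF finite_PP]) (auto simp: assms split: prod.splits)
  then show ?thesis by (simp add: case_prod_beta)
qed

lemma pf_QQ_any: "\<exists>d. pf d (\<lambda>x. QQ p n m (\<xi>(k := x)))"
proof -
  have "pf (\<Sum>z\<in>PP n. 2) (\<lambda>x. LL p (\<xi>(k := x)) n m)"
    unfolding LL_def by (rule pf_sum[OF finite_FF]) (rule pf_prodPP, rule pf_psi)
  moreover have "pf (0 + (\<Sum>z\<in>PP n. 2)) (\<lambda>x. of_real (pq_binom p n m) * VV (\<xi>(k := x)) n)"
    unfolding VV_def
    by (rule pf_mult[OF pf_const], rule pf_prodPP, rule pf_diff; rule pf_coord2)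
  ultimately have "pf (\<Sum>z\<in>PP n. 2) (\<lambda>x. QQ p n m (\<xi>(k := x)))"
    unfolding QQ_def by (intro pf_diff) simp_all
  then show ?thesis by blast
qed

lemma pf_prod_Suc:
  assumes "\<And>x y a b. a < Suc k \<Longrightarrow> b < Suc k \<Longrightarrow> h x a b = h y a b"
    and "\<And>a. a < Suc k \<Longrightarrow> pf 1 (\<lambda>x. h x a (Suc k))"
  shows "pf k (\<lambda>x. \<Prod>(a, b)\<in>PP (Suc k). h x a b)"
proof -
  have c: "(\<Prod>(a, b)\<in>PP k. h x a b) = (\<Prod>(a, b)\<in>PP k. h y a b)" for x y
    by (rule prod.cong[OF refl]) (use assms(1) in \<open>auto simp: PP_def\<close>)
  have "pf (0 + (\<Sum>a\<in>{1..k}. 1)) (\<lambda>x. (\<Prod>(a, b)\<in>PP k. h x a b) * (\<Prod>a\<in>{1..k}. h x a (Suc k)))"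
  proof (rule pf_mult)
    show "pf 0 (\<lambda>x. \<Prod>(a, b)\<in>PP k. h x a b)"
    proof -
      have "(\<lambda>x. \<Prod>(a, b)\<in>PP k. h x a b) = (\<lambda>x. \<Prod>(a, b)\<in>PP k. h 0 a b)"
        using c by blast
      then show ?thesis by (simp only: pf_const)
    qed
    show "pf (\<Sum>a\<in>{1..k}. 1) (\<lambda>x. \<Prod>a\<in>{1..k}. h x a (Suc k))"
      by (rule pf_prod[OF finite_atLeastAtMost]) (rule assms(2), simp)
  qed
  then show ?thesis by (simp add: prod_PP_Suc)
qed

lemma pf_psi_last: "a \<noteq> j \<Longrightarrow> pf 1 (\<lambda>x. psi p (\<xi>(j := x)) S a j)"
proof -
  assume a: "a \<noteq> j"
  have g1: "pf 1 (\<lambda>x. gg p (\<xi>(j := x)) j a)"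
  proof -
    have "pf 1 (\<lambda>x. of_real p + (of_real (1 - p) * \<xi> a) * x - x)"
      by (rule pf_diff[OF pf_add[OF pf_const pf_lin] pf_id]) simp
    then show ?thesis using a unfolding gg_def by (simp add: algebra_simps)
  qed
  have g2: "pf 1 (\<lambda>x. gg p (\<xi>(j := x)) a j)"
  proof -
    have "pf 1 (\<lambda>x. of_real p + (of_real (1 - p) * \<xi> a) * x - \<xi> a)"
      by (rule pf_diff[OF pf_add[OF pf_const pf_lin] pf_const])
    then show ?thesis using a unfolding gg_def by (simp add: algebra_simps)
  qed
  have g3: "pf 1 (\<lambda>x. x - \<xi> a)" by (intro pf_diff pf_id pf_const) auto
  have g4: "pf 1 (\<lambda>x. (\<xi>(j := x)) j - (\<xi>(j := x)) a)" using g3 a by simp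
  show ?thesis unfolding psi_def by (intro pf_if g4 g2 pf_uminus g1)
qed

lemma pf_QQ_last: "pf k (\<lambda>x. QQ p (Suc k) m (\<xi>(Suc k := x)))"
proof -
  have "pf k (\<lambda>x. LL p (\<xi>(Suc k := x)) (Suc k) m)"
    unfolding LL_def
  proof (rule pf_sum[OF finite_FF])
    fix S
    show "pf k (\<lambda>x. \<Prod>(a, b)\<in>PP (Suc k). psi p (\<xi>(Suc k := x)) S a b)"
    proof (rule pf_prod_Suc)
      show "psi p (\<xi>(Suc k := x)) S a b = psi p (\<xi>(Suc k := y)) S a b" if "a < Suc k" "b < Suc k" for x y a b
        using that by (auto simp: psi_def gg_def)
      show "pf 1 (\<lambda>x. psi p (\<xi>(Suc k := x)) S a (Suc k))" if "a < Suc k" for a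
        by (rule pf_psi_last) (use that in simp)
    qed
  qed
  moreover have "pf (0 + k) (\<lambda>x. of_real (pq_binom p (Suc k) m) * VV (\<xi>(Suc k := x)) (Suc k))"
    unfolding VV_def
  proof (rule pf_mult[OF pf_const], rule pf_prod_Suc)
    show "pf 1 (\<lambda>x. (\<xi>(Suc k := x)) (Suc k) - (\<xi>(Suc k := x)) a)" if "a < Suc k" for a
    proof -
      have "pf 1 (\<lambda>x. x - \<xi> a)" by (intro pf_diff pf_id pf_const) auto
      then show ?thesis using that by simp
    qed
  qed auto
  ultimately show ?thesis unfolding QQ_def by (intro pf_diff) simp_all
qed



lemma generic:
  fixes Q :: "(nat \<Rightarrow> complex) \<Rightarrow> complex" and B :: "nat set"
  assumes poly: "\<And>\<xi> k. \<exists>d. pf d (\<lambda>x. Q (\<xi>(k := x)))"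
    and "finite B" and "\<And>\<xi>. inj_on \<xi> B \<Longrightarrow> 1 \<notin> \<xi> ` B \<Longrightarrow> Q \<xi> = (0::complex)"
  shows "Q \<xi> = 0"
  using assms(2,3)
proof (induction B arbitrary: \<xi> rule: finite_induct)
  case empty then show ?case by simp
next
  case (insert k B)
  show ?case
  proof (rule insert.IH)
    fix \<eta> :: "nat \<Rightarrow> complex" assume inj: "inj_on \<eta> B" and n1: "1 \<notin> \<eta> ` B"
    obtain d where d: "pf d (\<lambda>x. Q (\<eta>(k := x)))" using poly by blast
    have "Q (\<eta>(k := \<eta> k)) = 0"
    proof (rule pf_zero_cofinite[OF d, of "insert 1 (\<eta> ` B)"])
      show "finite (insert 1 (\<eta> ` B))" using insert.hyps by simp
      fix x assume x: "x \<notin> insert 1 (\<eta> ` B)"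
      show "Q (\<eta>(k := x)) = 0"
      proof (rule insert.prems)
        have "inj_on (\<eta>(k := x)) B" using inj insert.hyps(2)
          by (metis fun_upd_other inj_on_cong)
        moreover have "(\<eta>(k := x)) ` B = \<eta> ` B" using insert.hyps(2) by (auto simp: image_def)
        moreover have "B - {k} = B" using insert.hyps(2) by auto
        ultimately show "inj_on (\<eta>(k := x)) (insert k B)" using x by (simp add: inj_on_insert)
        show "1 \<notin> (\<eta>(k := x)) ` insert k B" using n1 x insert.hyps(2) by auto
      qed
    qed
    then show "Q \<eta> = 0" by simp
  qed
qed

lemma prod_if_const:
  fixes c d :: complex
  shows "finite A \<Longrightarrow> (\<Prod>a\<in>A. if a \<in> T then c else d) = c ^ card (A \<inter> T) * d ^ card (A - T)"
proof (induction A rule: finite_induct)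
  case empty then show ?case by simp
next
  case (insert x A)
  then show ?case
    by (cases "x \<in> T") (auto simp: insert_Diff_if Int_insert_left card_insert_if)
qed

lemma psi_last_at1:
  "a \<noteq> Suc k \<Longrightarrow> psi p (\<xi>(Suc k := 1)) S a (Suc k) =
     (1 - \<xi> a) * (if (a \<in> S \<longleftrightarrow> Suc k \<in> S) then 1 else if a \<in> S then of_real (1 - p) else of_real p)"
  unfolding psi_def gg_def by (auto simp: algebra_simps)

lemma term_at1:
  assumes "S \<subseteq> {1..Suc k}"
  shows "(\<Prod>(a, b)\<in>PP (Suc k). psi p (\<xi>(Suc k := 1)) S a b) =
     (\<Prod>(a, b)\<in>PP k. psi p \<xi> (S - {Suc k}) a b) * (\<Prod>a\<in>{1..k}. 1 - \<xi> a) *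
     (if Suc k \<in> S then of_real p ^ (k - card (S - {Suc k})) else of_real (1 - p) ^ card S)"
proof -
  have c1: "(\<Prod>(a, b)\<in>PP k. psi p (\<xi>(Suc k := 1)) S a b) = (\<Prod>(a, b)\<in>PP k. psi p \<xi> (S - {Suc k}) a b)"
    by (rule prod.cong[OF refl]) (auto simp: PP_def psi_def gg_def)
  have c2: "(\<Prod>a\<in>{1..k}. psi p (\<xi>(Suc k := 1)) S a (Suc k)) =
      (\<Prod>a\<in>{1..k}. 1 - \<xi> a) * (\<Prod>a\<in>{1..k}. (if (a \<in> S \<longleftrightarrow> Suc k \<in> S) then 1 else if a \<in> S then of_real (1 - p) else of_real p))"
    by (subst prod.distrib[symmetric], rule prod.cong[OF refl], rule psi_last_at1) auto
  have c3: "(\<Prod>a\<in>{1..k}. (if (a \<in> S \<longleftrightarrow> Suc k \<in> S) then 1 else if a \<in> S then of_real (1 - p) else (of_real p :: complex)))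
     = (if Suc k \<in> S then of_real p ^ (k - card (S - {Suc k})) else of_real (1 - p) ^ card S)"
  proof (cases "Suc k \<in> S")
    case True
    have "(\<Prod>a\<in>{1..k}. (if (a \<in> S \<longleftrightarrow> Suc k \<in> S) then 1 else if a \<in> S then of_real (1 - p) else (of_real p :: complex)))
       = (\<Prod>a\<in>{1..k}. if a \<in> S - {Suc k} then 1 else of_real p)"
      using True by (intro prod.cong) auto
    also have "\<dots> = of_real p ^ card ({1..k} - S)" by (simp add: prod_if_const)
    also have "card ({1..k} - S) = k - card (S - {Suc k})"
    proof -
      have sub: "S - {Suc k} \<subseteq> {1..k}" using assms by auto
      have fT: "finite (S - {Suc k})" by (rule finite_subset[OF sub]) simp
      have "{1..k} - S = {1..k} - (S - {Suc k})" by auto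
      then show ?thesis using card_Diff_subset[OF fT sub] by simp
    qed
    finally show ?thesis using True by simp
  next
    case False
    have sub: "S \<subseteq> {1..k}" using assms False by (auto simp: le_Suc_eq)
    have "(\<Prod>a\<in>{1..k}. (if (a \<in> S \<longleftrightarrow> Suc k \<in> S) then 1 else if a \<in> S then of_real (1 - p) else (of_real p :: complex)))
       = (\<Prod>a\<in>{1..k}. if a \<in> S then of_real (1 - p) else 1)"
      using False by (intro prod.cong) auto
    also have "\<dots> = of_real (1 - p) ^ card ({1..k} \<inter> S)" by (simp add: prod_if_const)
    also have "{1..k} \<inter> S = S" using sub by auto
    finally show ?thesis using False by simp
  qed
  show ?thesis unfolding prod_PP_Suc c1 c2 c3 by simp
qed

lemma LL_at1:
  "LL p (\<xi>(Suc k := 1)) (Suc k) m = (\<Prod>a\<in>{1..k}. 1 - \<xi> a) *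
     (of_real (1 - p) ^ m * LL p \<xi> k m + (if 1 \<le> m then of_real p ^ (Suc k - m) * LL p \<xi> k (m - 1) else 0))"
proof -
  define G where "G = {T. T \<subseteq> {1..k} \<and> card T + 1 = m}"
  define t where "t S = (\<Prod>(a, b)\<in>PP (Suc k). psi p (\<xi>(Suc k := 1)) S a b)" for S
  define u where "u T = (\<Prod>(a, b)\<in>PP k. psi p \<xi> T a b)" for T
  define PI where "PI = (\<Prod>a\<in>{1..k}. 1 - \<xi> a)"
  have fG: "finite G" unfolding G_def by (rule finite_subset[of _ "Pow {1..k}"]) auto
  have split: "FF (Suc k) m = FF k m \<union> insert (Suc k) ` G"
  proof (rule set_eqI, rule iffI)
    fix S assume S: "S \<in> FF (Suc k) m"
    show "S \<in> FF k m \<union> insert (Suc k) ` G"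
    proof (cases "Suc k \<in> S")
      case True
      have Ss: "S \<subseteq> {1..Suc k}" "card S = m" using S unfolding FF_def by auto
      have fS: "finite S" using Ss(1) finite_subset by blast
      have "card S > 0" using fS True card_gt_0_iff by blast
      then have "card (S - {Suc k}) + 1 = m" using card_Diff_singleton[OF True] Ss(2) by simp
      moreover have "S - {Suc k} \<subseteq> {1..k}" using Ss(1) by (auto simp: le_Suc_eq)
      ultimately have "S - {Suc k} \<in> G" unfolding G_def by simp
      moreover have "S = insert (Suc k) (S - {Suc k})" using True by auto
      ultimately show ?thesis by blast
    next
      case False
      then show ?thesis using S unfolding FF_def by (auto simp: le_Suc_eq)
    qed
  next
    fix S assume "S \<in> FF k m \<union> insert (Suc k) ` G"
    then show "S \<in> FF (Suc k) m"
    proof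
      assume "S \<in> FF k m" then show ?thesis unfolding FF_def by auto
    next
      assume "S \<in> insert (Suc k) ` G"
      then obtain T where T: "T \<in> G" "S = insert (Suc k) T" by blast
      have "finite T" "Suc k \<notin> T" using T unfolding G_def by (auto intro: finite_subset)
      then show ?thesis using T unfolding G_def FF_def by auto
    qed
  qed
  have disj: "FF k m \<inter> insert (Suc k) ` G = {}" unfolding FF_def by auto
  have inj: "inj_on (insert (Suc k)) G"
  proof (rule inj_onI)
    fix T1 T2 assume "T1 \<in> G" "T2 \<in> G" "insert (Suc k) T1 = insert (Suc k) T2"
    moreover have "Suc k \<notin> T1" "Suc k \<notin> T2" using calculation(1,2) unfolding G_def by auto
    ultimately show "T1 = T2" by (metis Diff_insert_absorb)
  qed
  have "LL p (\<xi>(Suc k := 1)) (Suc k) m = (\<Sum>S\<in>FF k m. t S) + (\<Sum>T\<in>G. t (insert (Suc k) T))"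
    unfolding LL_def t_def[symmetric] split
    by (subst sum.union_disjoint) (use finite_FF fG disj in \<open>auto simp: sum.reindex[OF inj]\<close>)
  also have "(\<Sum>S\<in>FF k m. t S) = (\<Sum>S\<in>FF k m. u S * PI * of_real (1 - p) ^ m)"
  proof (rule sum.cong[OF refl])
    fix S assume S: "S \<in> FF k m"
    then have "S \<subseteq> {1..Suc k}" "Suc k \<notin> S" "card S = m" unfolding FF_def by auto
    then show "t S = u S * PI * of_real (1 - p) ^ m" unfolding t_def u_def PI_def
      by (subst term_at1) auto
  qed
  also have "(\<Sum>T\<in>G. t (insert (Suc k) T)) = (\<Sum>T\<in>G. u T * PI * of_real p ^ (Suc k - m))"
  proof (rule sum.cong[OF refl])
    fix T assume T: "T \<in> G"
    then have "insert (Suc k) T \<subseteq> {1..Suc k}" "Suc k \<notin> T" "card T + 1 = m" "insert (Suc k) T - {Suc k} = T"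
      unfolding G_def by auto
    then show "t (insert (Suc k) T) = u T * PI * of_real p ^ (Suc k - m)" unfolding t_def u_def PI_def
      by (subst term_at1) auto
  qed
  also have "(\<Sum>T\<in>G. u T * PI * of_real p ^ (Suc k - m)) = (if 1 \<le> m then of_real p ^ (Suc k - m) * LL p \<xi> k (m - 1) else 0) * PI"
  proof (cases "1 \<le> m")
    case True
    then have "G = FF k (m - 1)" unfolding G_def FF_def by auto
    then show ?thesis using True unfolding LL_def u_def by (simp add: sum_distrib_left sum_distrib_right mult_ac)
  next
    case False
    then have "G = {}" unfolding G_def by auto
    then show ?thesis using False by simp
  qed
  also have "(\<Sum>S\<in>FF k m. u S * PI * of_real (1 - p) ^ m) = of_real (1 - p) ^ m * LL p \<xi> k m * PI"
    unfolding LL_def u_def by (simp add: sum_distrib_left sum_distrib_right mult_ac)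
  finally have X: "LL p (\<xi>(Suc k := 1)) (Suc k) m = of_real (1 - p) ^ m * LL p \<xi> k m * PI + (if 1 \<le> m then of_real p ^ (Suc k - m) * LL p \<xi> k (m - 1) else 0) * PI" .
  show ?thesis unfolding PI_def[symmetric] X by (simp add: algebra_simps)
qed

lemma VV_at1: "VV (\<xi>(Suc k := 1)) (Suc k) = VV \<xi> k * (\<Prod>a\<in>{1..k}. 1 - \<xi> a)"
proof -
  have "(\<Prod>(a, b)\<in>PP k. (\<xi>(Suc k := 1)) b - (\<xi>(Suc k := 1)) a) = VV \<xi> k"
    unfolding VV_def by (rule prod.cong[OF refl]) (auto simp: PP_def)
  moreover have "(\<Prod>a\<in>{1..k}. (\<xi>(Suc k := 1)) (Suc k) - (\<xi>(Suc k := 1)) a) = (\<Prod>a\<in>{1..k}. 1 - \<xi> a)"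
    by (rule prod.cong[OF refl]) auto
  ultimately show ?thesis unfolding VV_def prod_PP_Suc by simp
qed



lemma pq_binom_0: "0 < p \<Longrightarrow> p < 1 \<Longrightarrow> pq_binom p n 0 = 1"
proof -
  assume p: "0 < p" "p < 1"
  have "pq_fact p n \<noteq> 0" using pq_fact_pos[OF p, of n] by simp
  moreover have "pq_fact p 0 = 1" by (simp add: pq_fact_def)
  ultimately show ?thesis by (simp add: pq_binom_def)
qed

lemma QQ_at1:
  assumes p: "0 < p" "p < 1" and IH: "\<And>m \<xi>. QQ p k m \<xi> = 0"
  shows "QQ p (Suc k) m (\<xi>(Suc k := 1)) = 0"
proof -
  have IH': "LL p \<xi> k j = of_real (pq_binom p k j) * VV \<xi> k" for j
    using IH[of j \<xi>] unfolding QQ_def by simp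
  define PI where "PI = (\<Prod>a\<in>{1..k}. 1 - \<xi> a)"
  have "LL p (\<xi>(Suc k := 1)) (Suc k) m = of_real (pq_binom p (Suc k) m) * VV (\<xi>(Suc k := 1)) (Suc k)"
  proof (cases "1 \<le> m")
    case True
    have "of_real (pq_binom p (Suc k) m) = (of_real ((1 - p) ^ m * pq_binom p k m + p ^ (Suc k - m) * pq_binom p k (m - 1)) :: complex)"
      using pq_pascal[OF p True] by simp
    then show ?thesis unfolding LL_at1 VV_at1 IH' PI_def[symmetric] using True
      by (simp add: algebra_simps)
  next
    case False
    then have "m = 0" by simp
    then show ?thesis unfolding LL_at1 VV_at1 IH' using pq_binom_0[OF p] by simp
  qed
  then show ?thesis unfolding QQ_def by simp
qed

lemma main_QQ:
  assumes p: "0 < p" "p < 1"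
  shows "QQ p n m \<xi> = 0"
  using p
proof (induction n arbitrary: m \<xi>)
  case 0
  have F: "FF 0 m = (if m = 0 then {{}} else {})" unfolding FF_def by auto
  have P: "PP 0 = {}" unfolding PP_def by auto
  show ?case unfolding QQ_def LL_def VV_def F P
    using pq_binom_0[OF p, of 0] by (simp add: pq_binom_def)
next
  case (Suc k)
  have IH: "\<And>m \<xi>. QQ p k m \<xi> = 0" using Suc p by blast
  show ?case
  proof (rule generic[of "QQ p (Suc k) m" "{1..k}"])
    show "\<exists>d. pf d (\<lambda>x. QQ p (Suc k) m (\<xi>(j := x)))" for \<xi> j by (rule pf_QQ_any)
    show "finite {1..k}" by simp
    fix \<eta> :: "nat \<Rightarrow> complex" assume inj: "inj_on \<eta> {1..k}" and n1: "1 \<notin> \<eta> ` {1..k}"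
    define R where "R = insert 1 (\<eta> ` {1..k})"
    have cR: "card R = Suc k" unfolding R_def using n1 card_image[OF inj] by simp
    have "QQ p (Suc k) m (\<eta>(Suc k := \<eta> (Suc k))) = 0"
    proof (rule pf_zero_roots[OF pf_QQ_last, of R])
      show "finite R" unfolding R_def by simp
      show "k < card R" using cR by simp
      fix r assume "r \<in> R"
      then consider "r = 1" | a where "a \<in> {1..k}" "r = \<eta> a" unfolding R_def by auto
      then show "QQ p (Suc k) m (\<eta>(Suc k := r)) = 0"
      proof cases
        case 1 then show ?thesis using QQ_at1[OF p IH] by simp
      next
        case 2
        show ?thesis by (rule QQ_eq_zero[of a]) (use 2 in auto)
      qed
    qed
    then show "QQ p (Suc k) m \<eta> = 0" by simp
  qed
qed



lemma prod_sub_PP: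
  "(\<Prod>(a, b)\<in>{(a, b). a \<in> {1..n} \<and> b \<in> {1..n} \<and> a < b \<and> C a b}. f a b) =
   (\<Prod>(a, b)\<in>PP n. if C a b then f a b else 1)"
proof -
  have e: "{(a, b). a \<in> {1..n} \<and> b \<in> {1..n} \<and> a < b \<and> C a b} = {z \<in> PP n. case z of (a, b) \<Rightarrow> C a b}"
    unfolding PP_def by auto
  show ?thesis unfolding e by (subst prod.inter_filter[OF finite_PP]) (auto intro!: prod.cong split: prod.splits)
qed

lemma Tm_gg: "Tm p \<xi> b a = (\<xi> b - \<xi> a) / gg p \<xi> a b"
  unfolding Tm_def gg_def ..

lemma Sm_gg: "Sm p \<xi> b a = - gg p \<xi> b a / gg p \<xi> a b"
  unfolding Sm_def gg_def by (simp add: mult_ac)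

theorem lemma2p5:
  fixes p :: real and \<xi> :: "nat \<Rightarrow> complex" and n m :: nat
  assumes "0 < p" "p < 1" "1 \<le> n" "m \<le> n"
    and "\<And>\<alpha> \<beta>. 1 \<le> \<alpha> \<Longrightarrow> \<alpha> < \<beta> \<Longrightarrow> \<beta> \<le> n \<Longrightarrow>
           of_real p + of_real (1 - p) * \<xi> \<alpha> * \<xi> \<beta> - \<xi> \<alpha> \<noteq> 0"
  shows "(\<Sum>S\<in>{S. S \<subseteq> {1..n} \<and> card S = m}.
            (\<Prod>(\<alpha>, \<beta>)\<in>{(\<alpha>, \<beta>). \<alpha> \<in> {1..n} - S \<and> \<beta> \<in> {1..n} - S \<and> \<alpha> < \<beta>}. Tm p \<xi> \<beta> \<alpha>)
          * (\<Prod>(\<alpha>, \<beta>)\<in>{(\<alpha>, \<beta>). \<alpha> \<in> S \<and> \<beta> \<in> S \<and> \<alpha> < \<beta>}. Tm p \<xi> \<beta> \<alpha>)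
          * (\<Prod>(\<alpha>, \<beta>)\<in>{(\<alpha>, \<beta>). \<alpha> \<in> S \<and> \<beta> \<in> {1..n} - S \<and> \<alpha> < \<beta>}. Sm p \<xi> \<beta> \<alpha>))
       = of_real (pq_binom p n m)
          * (\<Prod>(\<alpha>, \<beta>)\<in>{(\<alpha>, \<beta>). \<alpha> \<in> {1..n} \<and> \<beta> \<in> {1..n} \<and> \<alpha> < \<beta>}. Tm p \<xi> \<beta> \<alpha>)"
  (is "?L = ?R")
proof -
  define gP where "gP = (\<Prod>(a, b)\<in>PP n. gg p \<xi> a b)"
  have gnz: "gg p \<xi> a b \<noteq> 0" if "(a, b) \<in> PP n" for a b
    using assms(5)[of a b] that unfolding PP_def gg_def by auto
  have gP0: "gP \<noteq> 0" unfolding gP_def using gnz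
    by (subst prod_zero_iff[OF finite_PP]) auto
  have termeq: "((\<Prod>(\<alpha>, \<beta>)\<in>{(\<alpha>, \<beta>). \<alpha> \<in> {1..n} - S \<and> \<beta> \<in> {1..n} - S \<and> \<alpha> < \<beta>}. Tm p \<xi> \<beta> \<alpha>)
          * (\<Prod>(\<alpha>, \<beta>)\<in>{(\<alpha>, \<beta>). \<alpha> \<in> S \<and> \<beta> \<in> S \<and> \<alpha> < \<beta>}. Tm p \<xi> \<beta> \<alpha>)
          * (\<Prod>(\<alpha>, \<beta>)\<in>{(\<alpha>, \<beta>). \<alpha> \<in> S \<and> \<beta> \<in> {1..n} - S \<and> \<alpha> < \<beta>}. Sm p \<xi> \<beta> \<alpha>)) * gP
        = (\<Prod>(a, b)\<in>PP n. psi p \<xi> S a b)" if S: "S \<subseteq> {1..n}" for S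
  proof -
    have e1: "{(\<alpha>, \<beta>). \<alpha> \<in> {1..n} - S \<and> \<beta> \<in> {1..n} - S \<and> \<alpha> < \<beta>} = {(a, b). a \<in> {1..n} \<and> b \<in> {1..n} \<and> a < b \<and> (a \<notin> S \<and> b \<notin> S)}"
      by auto
    have e2: "{(\<alpha>, \<beta>). \<alpha> \<in> S \<and> \<beta> \<in> S \<and> \<alpha> < \<beta>} = {(a, b). a \<in> {1..n} \<and> b \<in> {1..n} \<and> a < b \<and> (a \<in> S \<and> b \<in> S)}"
      using S by auto
    have e3: "{(\<alpha>, \<beta>). \<alpha> \<in> S \<and> \<beta> \<in> {1..n} - S \<and> \<alpha> < \<beta>} = {(a, b). a \<in> {1..n} \<and> b \<in> {1..n} \<and> a < b \<and> (a \<in> S \<and> b \<notin> S)}"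
      using S by auto
    show ?thesis unfolding e1 e2 e3 prod_sub_PP gP_def prod.distrib[symmetric]
    proof (rule prod.cong[OF refl])
      fix z assume z: "z \<in> PP n"
      obtain a b where ab: "z = (a, b)" by (cases z)
      have g: "gg p \<xi> a b \<noteq> 0" using gnz z ab by simp
      show "(case z of (a, b) \<Rightarrow> (if a \<notin> S \<and> b \<notin> S then Tm p \<xi> b a else 1)) *
            (case z of (a, b) \<Rightarrow> (if a \<in> S \<and> b \<in> S then Tm p \<xi> b a else 1)) *
            (case z of (a, b) \<Rightarrow> (if a \<in> S \<and> b \<notin> S then Sm p \<xi> b a else 1)) *
            (case z of (a, b) \<Rightarrow> gg p \<xi> a b) = (case z of (a, b) \<Rightarrow> psi p \<xi> S a b)"
        using g unfolding ab by (auto simp: Tm_gg Sm_gg psi_def)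
    qed
  qed
  have "?L * gP = (\<Sum>S\<in>FF n m. \<Prod>(a, b)\<in>PP n. psi p \<xi> S a b)"
    unfolding FF_def sum_distrib_right by (rule sum.cong[OF refl]) (use termeq in auto)
  also have "\<dots> = of_real (pq_binom p n m) * VV \<xi> n"
    using main_QQ[OF assms(1,2), of n m \<xi>] unfolding QQ_def LL_def by simp
  also have "VV \<xi> n = (\<Prod>(a, b)\<in>PP n. Tm p \<xi> b a) * gP"
    unfolding VV_def gP_def prod.distrib[symmetric]
    by (rule prod.cong[OF refl]) (use gnz in \<open>auto simp: Tm_gg\<close>)
  also have "(\<Prod>(a, b)\<in>PP n. Tm p \<xi> b a) = (\<Prod>(\<alpha>, \<beta>)\<in>{(\<alpha>, \<beta>). \<alpha> \<in> {1..n} \<and> \<beta> \<in> {1..n} \<and> \<alpha> < \<beta>}. Tm p \<xi> \<beta> \<alpha>)"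
    unfolding PP_def ..
  finally have "?L * gP = ?R * gP" by (simp add: mult_ac)
  then show ?thesis using gP0 by simp
qed

end
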